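(* Let $n\ge 2$. If some set maximizing $\overline{re}$ over nonempty subsets of $\mathbb{S}$ has cardinality $2$, then $\{1,2\}$ maximizes $\overline{re}$ over nonempty subsets of $\mathbb{S}$ (no assumption on the size of the equilibrium demands is needed).
   Context: Market model: sellers $\mathbb{S}=\{1,\dots,n\}$, product qualities $\theta_1\ge\dots\ge\theta_n\ge0$. For displayed set $S$ and prices $p_i\ge0$: $a_i=e^{\theta_i-p_i}$, MNL demand $q_i=a_i/(1+\sum_{j\in S}a_j)$; sellers in $S$ play the Bertrand game (seller $i$ chooses $p_i\ge0$ to maximize $p_iq_i$). $V:(0,\infty)\to(0,1)$: $V(x)=$ the unique $v\in(0,1)$ with $v\exp(v/(1-v))=x$. For nonempty $S$, $\bar q_0(S)\in(0,1)$ is the unique solution of $\sum_{i\in S}V(\bar q_0e^{\theta_i-1})=1-\bar q_0$, $\bar q_i(S)=V(\bar q_0(S)e^{\theta_i-1})$, and $\overline{re}(S)=\sum_{i\in S}\frac{\bar q_i(S)}{1-\bar q_i(S)}$. *)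

theory Defs
  imports Complex_Main
begin

definition V :: "real \<Rightarrow> real" where
  "V x = (THE v. 0 < v \<and> v < 1 \<and> v * exp (v / (1 - v)) = x)"

text \<open>Equilibrium no-purchase share for displayed set S under qualities \<theta>.\<close>
definition q0bar :: "(nat \<Rightarrow> real) \<Rightarrow> nat set \<Rightarrow> real" where
  "q0bar \<theta> S = (THE q. 0 < q \<and> q < 1 \<and>
      (\<Sum>i\<in>S. V (q * exp (\<theta> i - 1))) = 1 - q)"

definition qbar :: "(nat \<Rightarrow> real) \<Rightarrow> nat set \<Rightarrow> nat \<Rightarrow> real" where
  "qbar \<theta> S i = V (q0bar \<theta> S * exp (\<theta> i - 1))"

definition rebar :: "(nat \<Rightarrow> real) \<Rightarrow> nat set \<Rightarrow> real" where
  "rebar \<theta> S = (\<Sum>i\<in>S. qbar \<theta> S i / (1 - qbar \<theta> S i))"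

definition is_max_rebar :: "(nat \<Rightarrow> real) \<Rightarrow> nat \<Rightarrow> nat set \<Rightarrow> bool" where
  "is_max_rebar \<theta> n S \<longleftrightarrow> S \<subseteq> {1..n} \<and> S \<noteq> {} \<and>
     (\<forall>T. T \<subseteq> {1..n} \<and> T \<noteq> {} \<longrightarrow> rebar \<theta> T \<le> rebar \<theta> S)"

end

theory Submission imports Defs begin

definition gg :: "real \<Rightarrow> real" where "gg v = v * exp (v / (1 - v))"

lemma gg_mono: assumes "0 < u" "u < v" "v < 1" shows "gg u < gg v"
proof -
  have "u / (1 - u) < v / (1 - v)" using assms by (simp add: field_simps)
  hence "exp (u/(1-u)) < exp (v/(1-v))" by simp
  thus ?thesis unfolding gg_def using assms
    by (intro mult_strict_mono) auto
qed

lemma gg_cont: assumes "v < 1" shows "isCont gg v"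
  unfolding gg_def using assms by (intro continuous_intros) auto

lemma gg_ge: assumes "0 < v" "v < 1" shows "v \<le> gg v" "v / (1 - v) \<le> gg v"
proof -
  have "1 \<le> exp (v/(1-v))" using assms by simp
  thus "v \<le> gg v" unfolding gg_def using assms by simp
  have "1 + v/(1-v) \<le> exp (v/(1-v))" by (rule exp_ge_add_one_self)
  hence "v * (1 + v/(1-v)) \<le> gg v" unfolding gg_def using assms by (simp add: mult_left_mono)
  moreover have "v * (1 + v/(1-v)) = v/(1-v)" using assms by (simp add: field_simps)
  ultimately show "v / (1 - v) \<le> gg v" by simp
qed

lemma gg_small: assumes "0 < v" "v \<le> 1/2" shows "gg v \<le> 3 * v"
proof -
  have "v/(1-v) \<le> 1" using assms by (simp add: field_simps)
  hence "exp (v/(1-v)) \<le> exp 1" by simp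
  also have "exp (1::real) \<le> 3" using exp_le by simp
  finally show ?thesis unfolding gg_def using assms by (simp add: mult_left_mono mult.commute)
qed

lemma gg_surj: assumes "0 < y" shows "\<exists>v. 0 < v \<and> v < 1 \<and> gg v = y"
proof -
  define v1 where "v1 = min (1/2) (y/3)"
  define v2 where "v2 = max (1/2) (y/(1+y))"
  have v1: "0 < v1" "v1 \<le> 1/2" using assms by (auto simp: v1_def)
  have v2: "1/2 \<le> v2" "v2 < 1" using assms by (auto simp: v2_def)
  have "gg v1 \<le> 3 * v1" using gg_small v1 by simp
  also have "\<dots> \<le> y" by (simp add: v1_def)
  finally have a: "gg v1 \<le> y" .
  have "y/(1+y) \<le> v2" by (simp add: v2_def)
  hence "y \<le> v2/(1-v2)" using v2 assms by (simp add: field_simps)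
  also have "\<dots> \<le> gg v2" using gg_ge v2 by simp
  finally have b: "y \<le> gg v2" .
  have "\<exists>x\<ge>v1. x \<le> v2 \<and> gg x = y"
    by (rule IVT[of gg v1 y v2, OF a b]) (use v1 v2 gg_cont in auto)
  then obtain x where "x \<ge> v1" "x \<le> v2" "gg x = y" by blast
  thus ?thesis using v1 v2 by (intro exI[of _ x]) auto
qed

lemma V_char: assumes "0 < v" "v < 1" "gg v = y" shows "V y = v"
  unfolding V_def
proof (rule the_equality)
  show "0 < v \<and> v < 1 \<and> v * exp (v / (1 - v)) = y" using assms by (simp add: gg_def)
next
  fix w assume w: "0 < w \<and> w < 1 \<and> w * exp (w / (1 - w)) = y"
  hence "gg w = gg v" using assms by (simp add: gg_def)
  thus "w = v" using gg_mono[of w v] gg_mono[of v w] w assms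
    by (metis less_irrefl linorder_neqE_linordered_idom)
qed

lemma V_prop: assumes "0 < y" shows "0 < V y" "V y < 1" "gg (V y) = y"
  using gg_surj[OF assms] V_char by auto

lemma V_mono: assumes "0 < y" "y < z" shows "V y < V z"
proof (rule ccontr)
  assume "\<not> V y < V z"
  hence "V z \<le> V y" by simp
  hence "gg (V z) \<le> gg (V y)" using gg_mono[of "V z" "V y"] V_prop[of z] V_prop[of y] assms
    by (cases "V z = V y") auto
  thus False using V_prop[of z] V_prop[of y] assms by simp
qed

lemma V_mono_le: assumes "0 < y" "y \<le> z" shows "V y \<le> V z"
  using V_mono[of y z] assms by (cases "y = z") auto

lemma V_le: assumes "0 < y" shows "V y \<le> y"
  using gg_ge(1)[of "V y"] V_prop[OF assms] by simp

lemma V_cont: assumes "0 < y" shows "isCont V y"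
proof -
  define v where "v = V y"
  have v: "0 < v" "v < 1" "gg v = y" using V_prop[OF assms] by (auto simp: v_def)
  define d where "d = min (v/2) ((1-v)/2)"
  have d: "0 < d" using v by (simp add: d_def)
  have "isCont V (gg v)"
  proof (rule isCont_inverse_function[where f=gg and g=V and x=v, OF d])
    fix z assume "\<bar>z - v\<bar> \<le> d"
    hence "z - v \<le> d" "v - z \<le> d" by (auto simp: abs_le_iff)
    moreover have "d \<le> v/2" "d \<le> (1-v)/2" unfolding d_def by (rule min.cobounded1, rule min.cobounded2)
    ultimately have z: "0 < z" "z < 1" using v by (simp_all add: field_simps)
    show "V (gg z) = z" using V_char z by simp
    show "isCont gg z" using gg_cont z by simp
  qed
  thus ?thesis using v by simp
qed


lemma sumV_strict: assumes "finite S" "S \<noteq> {}" "0 < t1" "t1 < t2"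
  shows "(\<Sum>i\<in>S. V (t1 * exp (\<theta> i - 1))) < (\<Sum>i\<in>S. V (t2 * exp (\<theta> i - 1)))"
  by (rule sum_strict_mono) (use assms in \<open>auto intro!: V_mono\<close>)

lemma q0bar_char: assumes "finite S" "S \<noteq> {}"
  shows "0 < q0bar \<theta> S \<and> q0bar \<theta> S < 1 \<and>
     (\<Sum>i\<in>S. V (q0bar \<theta> S * exp (\<theta> i - 1))) = 1 - q0bar \<theta> S"
proof -
  define h where "h t = (\<Sum>i\<in>S. V (t * exp (\<theta> i - 1))) + t - 1" for t
  define X where "X = (\<Sum>i\<in>S. exp (\<theta> i - 1))"
  have X: "0 < X" unfolding X_def using assms by (intro sum_pos) auto
  define t0 where "t0 = 1 / (2 * (1 + X))"
  have t0: "0 < t0" "t0 < 1" using X by (auto simp: t0_def field_simps)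
  have "(\<Sum>i\<in>S. V (t0 * exp (\<theta> i - 1))) \<le> (\<Sum>i\<in>S. t0 * exp (\<theta> i - 1))"
    by (rule sum_mono) (use t0 in \<open>auto intro!: V_le\<close>)
  also have "\<dots> = t0 * X" by (simp add: X_def sum_distrib_left)
  finally have "h t0 \<le> t0 * X + t0 - 1" by (simp add: h_def)
  also have "t0 * X + t0 - 1 < 0" using X by (simp add: t0_def field_simps)
  finally have a: "h t0 \<le> 0" by simp
  have h1: "0 < h 1" unfolding h_def using assms
    by (simp, intro sum_pos) (auto intro!: V_prop)
  have "\<exists>t\<ge>t0. t \<le> 1 \<and> h t = 0"
  proof (rule IVT[of h t0 0 1, OF a])
    show "0 \<le> h 1" using h1 by simp
    show "t0 \<le> 1" using t0 by simp
    show "\<forall>t. t0 \<le> t \<and> t \<le> 1 \<longrightarrow> isCont h t"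
    proof (intro allI impI)
      fix t assume "t0 \<le> t \<and> t \<le> 1"
      hence tp: "0 < t" using t0 by simp
      have "isCont (\<lambda>t. V (t * exp (\<theta> i - 1))) t" for i
        by (rule isCont_o2[where f="\<lambda>t. t * exp (\<theta> i - 1)" and g=V])
           (auto intro!: V_cont tp simp: tp)
      thus "isCont h t" unfolding h_def by (intro continuous_intros) auto
    qed
  qed
  then obtain t where t: "t0 \<le> t" "t \<le> 1" "h t = 0" by blast
  have t1: "t < 1" using t h1 by (cases "t = 1") auto
  have P: "0 < t \<and> t < 1 \<and> (\<Sum>i\<in>S. V (t * exp (\<theta> i - 1))) = 1 - t"
    using t t0 t1 by (auto simp: h_def)
  have "q0bar \<theta> S = t" unfolding q0bar_def
  proof (rule the_equality)
    show "0 < t \<and> t < 1 \<and> (\<Sum>i\<in>S. V (t * exp (\<theta> i - 1))) = 1 - t" by (rule P)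
  next
    fix s assume s: "0 < s \<and> s < 1 \<and> (\<Sum>i\<in>S. V (s * exp (\<theta> i - 1))) = 1 - s"
    show "s = t"
    proof (rule ccontr)
      assume "s \<noteq> t"
      hence "s < t \<or> t < s" by auto
      thus False
        using sumV_strict[OF assms, of s t \<theta>] sumV_strict[OF assms, of t s \<theta>] s P by auto
    qed
  qed
  thus ?thesis using P by simp
qed


lemma single_core:
  fixes a b :: real
  assumes "0 < a" "0 < b" "a * b < 1"
    and "b * exp b * (1 + a) \<le> (a + b) * exp (a + b) * (1 - a * b)"
  shows "b \<le> 1"
proof (rule ccontr)
  assume "\<not> b \<le> 1"
  hence b1: "1 < b" by simp
  have a1: "a < 1"
  proof (rule ccontr)
    assume "\<not> a < 1" hence "1 * 1 \<le> a * b" using b1 by (intro mult_mono) auto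
    thus False using assms by simp
  qed
  have e: "exp (a + b) = exp a * exp b" by (simp add: exp_add)
  have "b * (1 + a) * exp b \<le> ((a + b) * exp a * (1 - a * b)) * exp b"
    using assms(4) by (simp add: e algebra_simps)
  hence 1: "b * (1 + a) \<le> (a + b) * exp a * (1 - a * b)" by simp
  have "1 - a \<le> exp (-a)" using exp_ge_add_one_self[of "-a"] by simp
  hence ea: "exp a * (1 - a) \<le> 1" by (simp add: exp_minus field_simps)
  have p: "0 \<le> (a + b) * (1 - a * b)" using assms by simp
  have "b * (1 + a) * (1 - a) \<le> (a + b) * exp a * (1 - a * b) * (1 - a)"
    using 1 a1 by (intro mult_right_mono) auto
  also have "\<dots> = ((a + b) * (1 - a * b)) * (exp a * (1 - a))" by (simp add: algebra_simps)
  also have "\<dots> \<le> (a + b) * (1 - a * b)" using mult_left_mono[OF ea p] by simp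
  finally have "0 \<le> a * (1 - b * b)" by (simp add: algebra_simps)
  moreover have "a * (1 - b * b) < 0" using assms b1
  proof -
    have "1 * 1 < b * b" using b1 by (intro mult_strict_mono) auto
    thus ?thesis using assms by (intro mult_pos_neg) auto
  qed
  ultimately show False by simp
qed

lemma swap_poly:
  fixes a b d :: real
  assumes "0 < a" "0 \<le> d" "d < b" "b \<le> 1" "a * b < 1"
  shows "(b - d) * (1 + a + d) * (1 - a * b) \<le> (1 + d) * b * (1 + a) * (1 - (a + d) * (b - d))"
proof -
  define c where "c = 1 - a * b"
  have "(1 + d) * b * (1 + a) * (1 - (a + d) * (b - d)) - (b - d) * (1 + a + d) * (1 - a * b)
     = d * (b * (1 + a) * (1 + a) * (1 - b) + c * (1 + a - b)
         + d * (b * (1 + a) * (1 + a - b) + c) + d * d * b * (1 + a))"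
    by (simp add: c_def algebra_simps)
  also have "\<dots> \<ge> 0" using assms unfolding c_def
    by (intro mult_nonneg_nonneg add_nonneg_nonneg) auto
  finally show ?thesis by simp
qed

lemma swap_core:
  fixes a b a2 b2 :: real
  assumes "0 < a" "0 < b" "0 < a2" "0 < b2" "a * b < 1" "a2 * b2 < 1" "b \<le> 1"
    "a \<le> a2" "b2 \<le> b"
    "b2 * exp b2 * (1 + a2) * (1 - a * b) = b * exp b * (1 + a) * (1 - a2 * b2)"
  shows "a + b \<le> a2 + b2"
proof (rule ccontr)
  assume "\<not> a + b \<le> a2 + b2"
  define d where "d = b - b2"
  define e where "e = a2 - a"
  have de: "0 \<le> e" "e < d" "0 \<le> d" "d < b" using assms \<open>\<not> a + b \<le> a2 + b2\<close>
    by (auto simp: d_def e_def)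
  have a2e: "a2 = a + e" "b2 = b - d" by (auto simp: d_def e_def)
  have "exp b = exp b2 * exp d" by (simp add: d_def flip: exp_add)
  hence "b2 * (1 + a2) * (1 - a * b) * exp b2 = (b * (1 + a) * (1 - a2 * b2) * exp d) * exp b2"
    using assms(10) by (simp add: algebra_simps)
  hence eq: "b2 * (1 + a2) * (1 - a * b) = b * (1 + a) * (1 - a2 * b2) * exp d" by simp
  have "b * (1 + a) * (1 - a2 * b2) * (1 + d) \<le> b * (1 + a) * (1 - a2 * b2) * exp d"
    using assms by (intro mult_left_mono) auto
  hence L: "(1 + d) * b * (1 + a) * (1 - (a + e) * (b - d)) \<le> (b - d) * (1 + a + e) * (1 - a * b)"
    using eq a2e by (simp add: algebra_simps)
  have "(1 + d) * b * (1 + a) * (1 - (a + d) * (b - d)) \<le> (1 + d) * b * (1 + a) * (1 - (a + e) * (b - d))"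
    using de assms by (intro mult_left_mono) (auto intro!: mult_right_mono)
  moreover have "(b - d) * (1 + a + e) * (1 - a * b) < (b - d) * (1 + a + d) * (1 - a * b)"
    using de assms by (intro mult_strict_right_mono mult_strict_left_mono) auto
  ultimately show False using L swap_poly[of a d b] de assms by linarith
qed


lemma pair_facts:
  assumes "i \<noteq> j"
  shows "0 < q0bar \<theta> {i,j} \<and> q0bar \<theta> {i,j} < 1 \<and>
    V (q0bar \<theta> {i,j} * exp (\<theta> i - 1)) + V (q0bar \<theta> {i,j} * exp (\<theta> j - 1)) = 1 - q0bar \<theta> {i,j}
    \<and> rebar \<theta> {i,j} = V (q0bar \<theta> {i,j} * exp (\<theta> i - 1)) / (1 - V (q0bar \<theta> {i,j} * exp (\<theta> i - 1)))
       + V (q0bar \<theta> {i,j} * exp (\<theta> j - 1)) / (1 - V (q0bar \<theta> {i,j} * exp (\<theta> j - 1)))"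
  using q0bar_char[of "{i,j}" \<theta>] assms by (simp add: rebar_def qbar_def)

lemma single_facts:
  shows "0 < q0bar \<theta> {j} \<and> q0bar \<theta> {j} < 1 \<and>
    V (q0bar \<theta> {j} * exp (\<theta> j - 1)) = 1 - q0bar \<theta> {j}
    \<and> rebar \<theta> {j} = V (q0bar \<theta> {j} * exp (\<theta> j - 1)) / (1 - V (q0bar \<theta> {j} * exp (\<theta> j - 1)))"
  using q0bar_char[of "{j}" \<theta>] by (simp add: rebar_def qbar_def)

lemma ab_conv:
  fixes qa qb t xb :: real
  assumes "0 < qa" "qa < 1" "0 < qb" "qb < 1" "0 < t" "t = 1 - qa - qb" "gg qb = t * xb"
  shows "0 < qa/(1-qa)" "0 < qb/(1-qb)" "qa/(1-qa) * (qb/(1-qb)) < 1"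
    "qb/(1-qb) * exp (qb/(1-qb)) * (1 + qa/(1-qa)) = xb * (1 - qa/(1-qa) * (qb/(1-qb)))"
proof -
  show "0 < qa/(1-qa)" "0 < qb/(1-qb)" using assms by auto
  have "qa * qb < (1 - qa) * (1 - qb)" using assms by (simp add: algebra_simps)
  moreover have den: "0 < (1-qa)*(1-qb)" using assms by simp
  moreover have "qa/(1-qa) * (qb/(1-qb)) = (qa*qb)/((1-qa)*(1-qb))" by simp
  ultimately show "qa/(1-qa) * (qb/(1-qb)) < 1" by (simp add: divide_less_eq)
  have g: "qb * exp (qb/(1-qb)) = t * xb" using assms(7) by (simp add: gg_def)
  have "qb/(1-qb) * exp (qb/(1-qb)) * (1 + qa/(1-qa)) = (qb * exp (qb/(1-qb))) / ((1-qa)*(1-qb))"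
    using assms by (simp add: field_simps)
  also have "\<dots> = t * xb / ((1-qa)*(1-qb))" using g by simp
  also have "1 - qa/(1-qa) * (qb/(1-qb)) = t / ((1-qa)*(1-qb))"
  proof -
    have "0 < 1 + qa * qb - (qa + qb)" using den by (simp add: algebra_simps)
    thus ?thesis using assms(1-4) by (simp add: assms(6) field_simps)
  qed
  hence "t * xb / ((1-qa)*(1-qb)) = xb * (1 - qa/(1-qa) * (qb/(1-qb)))" by simp
  finally show "qb/(1-qb) * exp (qb/(1-qb)) * (1 + qa/(1-qa)) = xb * (1 - qa/(1-qa) * (qb/(1-qb)))" .
qed

lemma frac_mono: fixes p q :: real assumes "p \<le> q" "q < 1" shows "p/(1-p) \<le> q/(1-q)"
  using assms by (simp add: field_simps)

lemma swap_opt: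
  assumes "i \<noteq> j" "k \<noteq> j" "\<theta> i \<le> \<theta> k" "rebar \<theta> {j} \<le> rebar \<theta> {i,j}"
  shows "rebar \<theta> {i,j} \<le> rebar \<theta> {k,j}"
proof -
  define xi xj xk where "xi = exp (\<theta> i - 1)" and "xj = exp (\<theta> j - 1)" and "xk = exp (\<theta> k - 1)"
  have x: "0 < xi" "0 < xj" "0 < xk" "xi \<le> xk" using assms(3) by (auto simp: xi_def xj_def xk_def)
  define t where "t = q0bar \<theta> {i,j}"
  define t2 where "t2 = q0bar \<theta> {k,j}"
  define qa qb qa2 qb2 where "qa = V (t * xi)" and "qb = V (t * xj)"
    and "qa2 = V (t2 * xk)" and "qb2 = V (t2 * xj)"
  have P1: "0 < t" "t < 1" "qa + qb = 1 - t" "rebar \<theta> {i,j} = qa/(1-qa) + qb/(1-qb)"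
    using pair_facts[OF assms(1), of \<theta>] by (simp_all add: t_def qa_def qb_def xi_def xj_def)
  have P2: "0 < t2" "t2 < 1" "qa2 + qb2 = 1 - t2" "rebar \<theta> {k,j} = qa2/(1-qa2) + qb2/(1-qb2)"
    using pair_facts[OF assms(2), of \<theta>] by (simp_all add: t2_def qa2_def qb2_def xk_def xj_def)
  have Q: "0 < qa" "qa < 1" "gg qa = t * xi" "0 < qb" "qb < 1" "gg qb = t * xj"
    "0 < qa2" "qa2 < 1" "gg qa2 = t2 * xk" "0 < qb2" "qb2 < 1" "gg qb2 = t2 * xj"
    using V_prop[of "t * xi"] V_prop[of "t * xj"] V_prop[of "t2 * xk"] V_prop[of "t2 * xj"] x P1 P2
    by (simp_all add: qa_def qb_def qa2_def qb2_def)
  have tt: "t2 \<le> t"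
  proof (rule ccontr)
    assume "\<not> t2 \<le> t"
    hence "t < t2" by simp
    have "t * xi < t2 * xi" using \<open>t < t2\<close> x by (intro mult_strict_right_mono) auto
    also have "\<dots> \<le> t2 * xk" using x P2 by (intro mult_left_mono) auto
    finally have "t * xi < t2 * xk" .
    hence "qa < qa2" unfolding qa_def qa2_def using x P1 by (intro V_mono) auto
    moreover have "qb < qb2" unfolding qb_def qb2_def using x P1 \<open>t < t2\<close> by (intro V_mono) auto
    ultimately show False using P1 P2 \<open>t < t2\<close> by linarith
  qed
  have "qb2 \<le> qb" unfolding qb_def qb2_def using x P2 tt by (intro V_mono_le) (auto intro: mult_right_mono)
  hence qq: "qb2 \<le> qb" "qa \<le> qa2" using P1 P2 tt by linarith+
  define a b a2 b2 where "a = qa/(1-qa)" and "b = qb/(1-qb)" and "a2 = qa2/(1-qa2)" and "b2 = qb2/(1-qb2)"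
  have C1: "0 < a" "0 < b" "a * b < 1" "b * exp b * (1 + a) = xj * (1 - a * b)"
    using ab_conv[of qa qb t xj] Q P1 unfolding a_def b_def by auto
  have C2: "0 < a2" "0 < b2" "a2 * b2 < 1" "b2 * exp b2 * (1 + a2) = xj * (1 - a2 * b2)"
    using ab_conv[of qa2 qb2 t2 xj] Q P2 unfolding a2_def b2_def by auto
  have mono: "a \<le> a2" "b2 \<le> b" using qq Q unfolding a_def a2_def b_def b2_def
    by (auto intro: frac_mono)
  define s where "s = q0bar \<theta> {j}"
  define q where "q = V (s * xj)"
  have S: "0 < s" "s < 1" "q = 1 - s" "rebar \<theta> {j} = q/(1-q)"
    using single_facts[of \<theta> j] by (simp_all add: s_def q_def xj_def)
  have gq: "gg q = s * xj" using V_prop[of "s * xj"] x S by (simp add: q_def)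
  define r0 where "r0 = q/(1-q)"
  have r0: "0 < r0" using S by (simp add: r0_def)
  have "r0 * exp r0 = xj"
  proof -
    have "q * exp r0 = (1 - q) * xj" using gq S by (simp add: gg_def r0_def)
    have "r0 * exp r0 = (q * exp r0) / (1 - q)" by (simp add: r0_def)
    also have "\<dots> = xj" using \<open>q * exp r0 = (1 - q) * xj\<close> S by simp
    finally show ?thesis .
  qed
  moreover have "r0 \<le> a + b" using assms(4) P1 S by (simp add: r0_def a_def b_def)
  ultimately have "xj \<le> (a + b) * exp (a + b)" using r0
    by (metis exp_le_cancel_iff less_eq_real_def mult_mono exp_gt_zero order.trans)
  hence "b * exp b * (1 + a) \<le> (a + b) * exp (a + b) * (1 - a * b)"
    using C1 by (simp add: mult_right_mono)
  hence b1: "b \<le> 1" using single_core C1 by blast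
  have "b2 * exp b2 * (1 + a2) * (1 - a * b) = b * exp b * (1 + a) * (1 - a2 * b2)"
    using C1 C2 by simp
  hence "a + b \<le> a2 + b2" using swap_core[of a b a2 b2] C1 C2 b1 mono by blast
  thus ?thesis using P1 P2 by (simp add: a_def b_def a2_def b2_def)
qed


theorem theorem8:
  fixes \<theta> :: "nat \<Rightarrow> real" and n :: nat
  assumes "n \<ge> 2"
    and "\<And>i j. 1 \<le> i \<Longrightarrow> i \<le> j \<Longrightarrow> j \<le> n \<Longrightarrow> \<theta> j \<le> \<theta> i"
    and "\<And>i. 1 \<le> i \<Longrightarrow> i \<le> n \<Longrightarrow> 0 \<le> \<theta> i"
    and "\<exists>S. is_max_rebar \<theta> n S \<and> card S = 2"
  shows "is_max_rebar \<theta> n {1, 2}"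
proof -
  obtain S where S: "is_max_rebar \<theta> n S" "card S = 2" using assms(4) by blast
  obtain x y where xy: "S = {x, y}" "x \<noteq> y" using S(2) card_2_iff[of S] by blast
  obtain i j where ij: "S = {i, j}" "i < j"
  proof (cases "x < y")
    case True thus ?thesis using that xy by blast
  next
    case False hence "y < x" using xy by simp
    moreover have "S = {y, x}" using xy by (simp add: insert_commute)
    ultimately show ?thesis using that by blast
  qed
  have Sm1: "S \<subseteq> {1..n}" using S(1) by (simp add: is_max_rebar_def)
  have Sm2: "\<And>T. T \<subseteq> {1..n} \<Longrightarrow> T \<noteq> {} \<Longrightarrow> rebar \<theta> T \<le> rebar \<theta> S"
    using S(1) by (simp add: is_max_rebar_def)
  have ijr: "1 \<le> i" "j \<le> n" using Sm1 ij by auto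
  have st1: "rebar \<theta> {i,j} \<le> rebar \<theta> {1,j}"
  proof (rule swap_opt)
    show "i \<noteq> j" "1 \<noteq> j" using ij ijr by auto
    show "\<theta> i \<le> \<theta> 1" using assms(2)[of 1 i] ijr ij by auto
    have "{j} \<subseteq> {1..n}" using ijr ij by auto
    thus "rebar \<theta> {j} \<le> rebar \<theta> {i,j}" using Sm2[of "{j}"] ij by simp
  qed
  have st2: "rebar \<theta> {j,1} \<le> rebar \<theta> {2,1}"
  proof (rule swap_opt)
    show "j \<noteq> 1" "(2::nat) \<noteq> 1" using ij ijr by auto
    show "\<theta> j \<le> \<theta> 2" using assms(2)[of 2 j] ijr ij by auto
    have "{1} \<subseteq> {1..n}" using assms(1) by auto
    hence "rebar \<theta> {1} \<le> rebar \<theta> S" using Sm2[of "{1}"] by simp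
    moreover have "{j,1} = {1,j}" by (rule insert_commute)
    ultimately show "rebar \<theta> {1} \<le> rebar \<theta> {j,1}" using st1 ij by simp
  qed
  have e: "{2,1} = {1,2::nat}" by (rule insert_commute)
  have R: "rebar \<theta> S \<le> rebar \<theta> {1,2}"
    using st1 st2 ij e by (simp add: insert_commute)
  show ?thesis unfolding is_max_rebar_def
  proof (intro conjI allI impI)
    show "{1, 2} \<subseteq> {1..n}" using assms(1) by auto
    show "{1, 2::nat} \<noteq> {}" by simp
    fix T assume "T \<subseteq> {1..n} \<and> T \<noteq> {}"
    thus "rebar \<theta> T \<le> rebar \<theta> {1, 2}" using Sm2[of T] R by simp
  qed
qed

end
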